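(* Let $p(g)=y^{a(g)}x^{b(g)}$ be a continuous $1$-cocycle of $G_k$ with values in $\pi/[\pi]_2$, so that $b,a:G_k\to\hat{\mathbb Z}(1)$ are cocycles. Then $\delta_2(p)=b\cup a$ in ${\rm H}^2(G_k,\hat{\mathbb Z}(2))$.
   Context: Let $k$ be either a subfield of $\mathbb C$ or the completion of a number field $F\subset\mathbb C$ at a place, with fixed embeddings $\mathbb C\supset\overline{\mathbb Q}\subseteq\overline k$; $G_k=\operatorname{Gal}(\overline k/k)$, $\chi$ the cyclotomic character. $\pi=\pi_1^{et}(\mathbb P^1_{\overline k}-\{0,1,\infty\},\overrightarrow{01})\cong\langle x,y\rangle^\wedge$ (profinite free group; $x$ loop around $0$, $y$ loop around $1$), with $G_k$-action $\sigma(x)=x^{\chi(\sigma)}$, $\sigma(y)=\mathfrak f(\sigma)^{-1}y^{\chi(\sigma)}\mathfrak f(\sigma)$ for a cocycle $\mathfrak f:G_k\to[\pi]_2$. Lower central series $[\pi]_1=\pi$, $[\pi]_{n+1}=\overline{[\pi,[\pi]_n]}$, $[u,v]=uvu^{-1}v^{-1}$. $\pi/[\pi]_2\cong\hat{\mathbb Z}(1)x\oplus\hat{\mathbb Z}(1)y$ and $[\pi]_2/[\pi]_3\cong\hat{\mathbb Z}(2)$ via the basis $[x,y]$, where $\hat{\mathbb Z}(n)$ is $\hat{\mathbb Z}$ with action through $\chi^n$. $\delta_2:{\rm H}^1(G_k,\pi/[\pi]_2)\to{\rm H}^2(G_k,[\pi]_2/[\pi]_3)$ is the connecting map of $1\to[\pi]_2/[\pi]_3\to\pi/[\pi]_3\to\pi/[\pi]_2\to1$.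 Cup product of inhomogeneous cochains: $(b\cup a)(g,h)=b(g)\,\chi(g)a(h)$. *)

theory Defs
  imports "HOL-Analysis.Analysis" "HOL-Algebra.Group"
begin

text \<open>Zhat is realised as the inverse limit of the rings Z/(n!) (n = 0,1,2,...):
  an element is a compatible sequence of residues a n in {0..<n!}.\<close>

type_synonym zhat = "nat \<Rightarrow> int"

definition zhat_set :: "zhat set" where
  "zhat_set = {a. (\<forall>n. 0 \<le> a n \<and> a n < int (fact n)) \<and>
                  (\<forall>m n. m \<le> n \<longrightarrow> a m = a n mod int (fact m))}"

definition zadd :: "zhat \<Rightarrow> zhat \<Rightarrow> zhat" where
  "zadd a b = (\<lambda>n. (a n + b n) mod int (fact n))"

definition zmul :: "zhat \<Rightarrow> zhat \<Rightarrow> zhat" where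
  "zmul a b = (\<lambda>n. (a n * b n) mod int (fact n))"

definition zneg :: "zhat \<Rightarrow> zhat" where
  "zneg a = (\<lambda>n. (- a n) mod int (fact n))"

definition zzero :: zhat where
  "zzero = (\<lambda>n. 0)"

definition zone :: zhat where
  "zone = (\<lambda>n. 1 mod int (fact n))"

definition zhat_top :: "zhat topology" where
  "zhat_top = subtopology
     (product_topology (\<lambda>n. discrete_topology {0..<int (fact n)}) UNIV) zhat_set"

definition zhat_unit :: "zhat \<Rightarrow> bool" where
  "zhat_unit u \<longleftrightarrow> u \<in> zhat_set \<and> (\<exists>v\<in>zhat_set. zmul u v = zone)"

definition totally_disconnected_space :: "'a topology \<Rightarrow> bool" where
  "totally_disconnected_space T \<longleftrightarrow>
     (\<forall>C. connectedin T C \<longrightarrow> (\<exists>x. C \<subseteq> {x}))"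

definition profinite_group :: "('g, 'm) monoid_scheme \<Rightarrow> 'g topology \<Rightarrow> bool" where
  "profinite_group G T \<longleftrightarrow> group G \<and> topspace T = carrier G \<and>
     continuous_map (prod_topology T T) T (\<lambda>(g, h). g \<otimes>\<^bsub>G\<^esub> h) \<and>
     continuous_map T T (\<lambda>g. inv\<^bsub>G\<^esub> g) \<and>
     compact_space T \<and> Hausdorff_space T \<and> totally_disconnected_space T"

text \<open>A continuous character chi : G -> Zhat^x (playing the role of the cyclotomic character).\<close>
definition zhat_character :: "('g, 'm) monoid_scheme \<Rightarrow> 'g topology \<Rightarrow> ('g \<Rightarrow> zhat) \<Rightarrow> bool" where
  "zhat_character G T chi \<longleftrightarrow> continuous_map T zhat_top chi \<and>
     (\<forall>g\<in>carrier G. zhat_unit (chi g)) \<and>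
     (\<forall>g\<in>carrier G. \<forall>h\<in>carrier G. chi (g \<otimes>\<^bsub>G\<^esub> h) = zmul (chi g) (chi h))"

text \<open>pi/[pi]_2 = Zhat(1) x (+) Zhat(1) y, written as pairs (coefficient of x, coefficient of y).
  The Galois action is multiplication by chi on both coordinates.\<close>

type_synonym piab = "zhat \<times> zhat"

definition piab_add :: "piab \<Rightarrow> piab \<Rightarrow> piab" where
  "piab_add u v = (zadd (fst u) (fst v), zadd (snd u) (snd v))"

definition piab_act :: "('g \<Rightarrow> zhat) \<Rightarrow> 'g \<Rightarrow> piab \<Rightarrow> piab" where
  "piab_act chi g u = (zmul (chi g) (fst u), zmul (chi g) (snd u))"

text \<open>pi/[pi]_3: the free class-2 nilpotent profinite group on x, y, i.e. the Heisenberg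
  group over Zhat. The triple (i, j, k) stands for x^i y^j [x,y]^k, where [x,y] = x y x^-1 y^-1
  is central; hence y^j x^i = x^i y^j [x,y]^(-ij).\<close>

type_synonym pi3 = "zhat \<times> zhat \<times> zhat"

definition pi3_mult :: "pi3 \<Rightarrow> pi3 \<Rightarrow> pi3" where
  "pi3_mult u v = (case u of (i, j, k) \<Rightarrow> case v of (i', j', k') \<Rightarrow>
      (zadd i i', zadd j j', zadd (zadd k k') (zneg (zmul j i'))))"

definition pi3_inv :: "pi3 \<Rightarrow> pi3" where
  "pi3_inv u = (case u of (i, j, k) \<Rightarrow> (zneg i, zneg j, zneg (zadd k (zmul i j))))"

text \<open>Galois action on pi/[pi]_3: sigma(x) = x^chi, sigma(y) = f^-1 y^chi f = y^chi modulo [pi]_3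
  (conjugation by f in [pi]_2 is trivial mod [pi]_3); hence sigma([x,y]) = [x,y]^(chi^2).\<close>
definition pi3_act :: "('g \<Rightarrow> zhat) \<Rightarrow> 'g \<Rightarrow> pi3 \<Rightarrow> pi3" where
  "pi3_act chi g u = (case u of (i, j, k) \<Rightarrow>
      (zmul (chi g) i, zmul (chi g) j, zmul (zmul (chi g) (chi g)) k))"

definition pi3_proj :: "pi3 \<Rightarrow> piab" where
  "pi3_proj u = (fst u, fst (snd u))"

definition pi3_comm :: "zhat \<Rightarrow> pi3" where
  "pi3_comm k = (zzero, zzero, k)"

definition piab_cocycle :: "('g, 'm) monoid_scheme \<Rightarrow> 'g topology \<Rightarrow> ('g \<Rightarrow> zhat) \<Rightarrow> ('g \<Rightarrow> piab) \<Rightarrow> bool" where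
  "piab_cocycle G T chi p \<longleftrightarrow> continuous_map T (prod_topology zhat_top zhat_top) p \<and>
     (\<forall>g\<in>carrier G. \<forall>h\<in>carrier G. p (g \<otimes>\<^bsub>G\<^esub> h) = piab_add (p g) (piab_act chi g (p h)))"

definition pi3_lift :: "'g topology \<Rightarrow> ('g \<Rightarrow> piab) \<Rightarrow> ('g \<Rightarrow> pi3) \<Rightarrow> bool" where
  "pi3_lift T p P \<longleftrightarrow>
     continuous_map T (prod_topology zhat_top (prod_topology zhat_top zhat_top)) P \<and>
     (\<forall>g\<in>topspace T. pi3_proj (P g) = p g)"

definition delta2_cochain :: "('g, 'm) monoid_scheme \<Rightarrow> ('g \<Rightarrow> zhat) \<Rightarrow> ('g \<Rightarrow> pi3) \<Rightarrow> 'g \<Rightarrow> 'g \<Rightarrow> pi3" where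
  "delta2_cochain G chi P g h =
     pi3_mult (pi3_mult (P g) (pi3_act chi g (P h))) (pi3_inv (P (g \<otimes>\<^bsub>G\<^esub> h)))"

definition cup11 :: "('g \<Rightarrow> zhat) \<Rightarrow> ('g \<Rightarrow> zhat) \<Rightarrow> ('g \<Rightarrow> zhat) \<Rightarrow> 'g \<Rightarrow> 'g \<Rightarrow> zhat" where
  "cup11 chi b a g h = zmul (b g) (zmul (chi g) (a h))"

definition coboundary_Z2 :: "('g, 'm) monoid_scheme \<Rightarrow> ('g \<Rightarrow> zhat) \<Rightarrow> ('g \<Rightarrow> zhat) \<Rightarrow> 'g \<Rightarrow> 'g \<Rightarrow> zhat" where
  "coboundary_Z2 G chi c g h =
     zadd (zadd (c g) (zmul (zmul (chi g) (chi g)) (c h))) (zneg (c (g \<otimes>\<^bsub>G\<^esub> h)))"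

definition cohomologous_Z2 :: "('g, 'm) monoid_scheme \<Rightarrow> 'g topology \<Rightarrow> ('g \<Rightarrow> zhat) \<Rightarrow>
    ('g \<Rightarrow> 'g \<Rightarrow> zhat) \<Rightarrow> ('g \<Rightarrow> 'g \<Rightarrow> zhat) \<Rightarrow> bool" where
  "cohomologous_Z2 G T chi u v \<longleftrightarrow>
     (\<exists>c. continuous_map T zhat_top c \<and>
        (\<forall>g\<in>carrier G. \<forall>h\<in>carrier G. u g h = zadd (v g h) (coboundary_Z2 G chi c g h)))"

end

theory Submission
  imports Defs
begin


lemma fact_dvd_int: "m \<le> n \<Longrightarrow> int (fact m) dvd int (fact n)"
  by (simp add: fact_dvd)

lemma zhat_setI:
  assumes "\<And>n. 0 \<le> a n" "\<And>n. a n < int (fact n)"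
    "\<And>m n. m \<le> n \<Longrightarrow> a m = a n mod int (fact m)"
  shows "a \<in> zhat_set"
  unfolding zhat_set_def mem_Collect_eq
  by (intro conjI allI impI assms)

lemma zhat_setD: "u \<in> zhat_set \<Longrightarrow> m \<le> n \<Longrightarrow> u m = u n mod int (fact m)"
  unfolding zhat_set_def mem_Collect_eq by (elim conjE allE impE)

lemma zadd_set: assumes "u \<in> zhat_set" "v \<in> zhat_set" shows "zadd u v \<in> zhat_set"
proof (rule zhat_setI)
  fix n show "0 \<le> zadd u v n" by (simp add: zadd_def)
  show "zadd u v n < int (fact n)" by (simp add: zadd_def)
next
  fix m n :: nat assume mn: "m \<le> n"
  have "zadd u v m = (u m + v m) mod int (fact m)" by (simp only: zadd_def)
  also have "\<dots> = (u n mod int (fact m) + v n mod int (fact m)) mod int (fact m)"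
    by (simp only: zhat_setD[OF assms(1) mn] zhat_setD[OF assms(2) mn])
  also have "\<dots> = (u n + v n) mod int (fact m)" by (simp add: mod_add_eq)
  also have "\<dots> = ((u n + v n) mod int (fact n)) mod int (fact m)"
    by (rule mod_mod_cancel[OF fact_dvd_int[OF mn], symmetric])
  finally have X: "zadd u v m = zadd u v n mod int (fact m)" by (simp only: zadd_def)
  then show "zadd u v m = zadd u v n mod int (fact m)" .
qed

lemma zmul_set: assumes "u \<in> zhat_set" "v \<in> zhat_set" shows "zmul u v \<in> zhat_set"
proof (rule zhat_setI)
  fix n show "0 \<le> zmul u v n" by (simp add: zmul_def)
  show "zmul u v n < int (fact n)" by (simp add: zmul_def)
next
  fix m n :: nat assume mn: "m \<le> n"
  have "zmul u v m = (u m * v m) mod int (fact m)" by (simp only: zmul_def)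
  also have "\<dots> = (u n mod int (fact m) * (v n mod int (fact m))) mod int (fact m)"
    by (simp only: zhat_setD[OF assms(1) mn] zhat_setD[OF assms(2) mn])
  also have "\<dots> = (u n * v n) mod int (fact m)" by (simp add: mod_mult_eq)
  also have "\<dots> = ((u n * v n) mod int (fact n)) mod int (fact m)"
    by (rule mod_mod_cancel[OF fact_dvd_int[OF mn], symmetric])
  finally have X: "zmul u v m = zmul u v n mod int (fact m)" by (simp only: zmul_def)
  then show "zmul u v m = zmul u v n mod int (fact m)" .
qed

lemma comp_cont:
  assumes "continuous_map T zhat_top f"
  shows "continuous_map T (discrete_topology {0..<int (fact n)}) (\<lambda>x. f x n)"
proof -
  have "continuous_map zhat_top (discrete_topology {0..<int (fact n)}) (\<lambda>x. x n)"
    unfolding zhat_top_def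
    by (rule continuous_map_from_subtopology, rule continuous_map_product_projection) simp
  from continuous_map_compose[OF assms this] show ?thesis by (simp add: o_def)
qed

lemma zhat_cont_iff:
  "continuous_map T zhat_top f \<longleftrightarrow>
    f \<in> topspace T \<rightarrow> zhat_set \<and> (\<forall>n. continuous_map T (discrete_topology {0..<int (fact n)}) (\<lambda>x. f x n))"
  unfolding zhat_top_def continuous_map_in_subtopology continuous_map_componentwise_UNIV
  by blast

lemma binop_cont:
  assumes f1: "continuous_map T zhat_top f1" and f2: "continuous_map T zhat_top f2"
  shows "continuous_map T (discrete_topology {0..<int (fact n)})
           (\<lambda>x. H (f1 x n) (f2 x n) mod int (fact n))"
proof -
  let ?D = "discrete_topology {0..<int (fact n)}"
  have "continuous_map T (prod_topology ?D ?D) (\<lambda>x. (f1 x n, f2 x n))"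
    using comp_cont[OF f1] comp_cont[OF f2] by (simp add: continuous_map_pairwise o_def)
  hence c: "continuous_map T (discrete_topology ({0..<int (fact n)} \<times> {0..<int (fact n)})) (\<lambda>x. (f1 x n, f2 x n))"
    by (simp add: prod_topology_discrete_topology)
  have "continuous_map (discrete_topology ({0..<int (fact n)} \<times> {0..<int (fact n)})) ?D
          (\<lambda>(u,v). H u v mod int (fact n))"
    unfolding continuous_map_from_discrete_topology topspace_discrete_topology
    by (simp add: Pi_iff split_beta)
  from continuous_map_compose[OF c this] show ?thesis by (simp add: o_def)
qed

lemma zadd_cont:
  assumes f1: "continuous_map T zhat_top f1" and f2: "continuous_map T zhat_top f2"
  shows "continuous_map T zhat_top (\<lambda>x. zadd (f1 x) (f2 x))"
  unfolding zhat_cont_iff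
proof (intro conjI allI)
  show "(\<lambda>x. zadd (f1 x) (f2 x)) \<in> topspace T \<rightarrow> zhat_set"
    using f1 f2 zadd_set unfolding zhat_cont_iff Pi_iff by simp
  fix n show "continuous_map T (discrete_topology {0..<int (fact n)}) (\<lambda>x. zadd (f1 x) (f2 x) n)"
    unfolding zadd_def using binop_cont[OF f1 f2, of n "(+)"] by simp
qed

lemma zmul_cont:
  assumes f1: "continuous_map T zhat_top f1" and f2: "continuous_map T zhat_top f2"
  shows "continuous_map T zhat_top (\<lambda>x. zmul (f1 x) (f2 x))"
  unfolding zhat_cont_iff
proof (intro conjI allI)
  show "(\<lambda>x. zmul (f1 x) (f2 x)) \<in> topspace T \<rightarrow> zhat_set"
    using f1 f2 zmul_set unfolding zhat_cont_iff Pi_iff by simp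
  fix n show "continuous_map T (discrete_topology {0..<int (fact n)}) (\<lambda>x. zmul (f1 x) (f2 x) n)"
    unfolding zmul_def using binop_cont[OF f1 f2, of n "(*)"] by simp
qed

lemma zcancel: "zadd u (zneg u) = zzero"
  by (rule ext) (simp add: zadd_def zneg_def zzero_def mod_add_right_eq)



definition eqm :: "int \<Rightarrow> int \<Rightarrow> int \<Rightarrow> bool" where
  "eqm M a b \<longleftrightarrow> a mod M = b mod M"

lemma eqm_refl: "eqm M a a" by (simp add: eqm_def)

lemma zadd_E: "eqm (int (fact n)) (u n) U \<Longrightarrow> eqm (int (fact n)) (v n) V \<Longrightarrow>
   eqm (int (fact n)) (zadd u v n) (U + V)"
  unfolding eqm_def zadd_def by (metis mod_add_eq mod_mod_trivial)

lemma zmul_E: "eqm (int (fact n)) (u n) U \<Longrightarrow> eqm (int (fact n)) (v n) V \<Longrightarrow>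
   eqm (int (fact n)) (zmul u v n) (U * V)"
  unfolding eqm_def zmul_def by (metis mod_mult_eq mod_mod_trivial)

lemma zneg_E: "eqm (int (fact n)) (u n) U \<Longrightarrow>
   eqm (int (fact n)) (zneg u n) (- U)"
  unfolding eqm_def zneg_def by (metis mod_minus_eq mod_mod_trivial)

lemma eqm_conclude:
  assumes "eqm M a X" "eqm M b Y" "X = Y" "a mod M = a" "b mod M = b"
  shows "a = b"
  using assms unfolding eqm_def by metis

lemma key:
  "snd (snd (pi3_mult (pi3_mult (B1,A1,C1) (pi3_act chi g (B2,A2,C2)))
      (pi3_inv (zadd B1 (zmul (chi g) B2), zadd A1 (zmul (chi g) A2), C3))))
   = zadd (zmul B1 (zmul (chi g) A2))
      (zadd (zadd (zadd C1 (zmul A1 B1)) (zmul (zmul (chi g) (chi g)) (zadd C2 (zmul A2 B2))))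
         (zneg (zadd C3 (zmul (zadd A1 (zmul (chi g) A2)) (zadd B1 (zmul (chi g) B2))))))"
  (is "?lhs = ?rhs")
proof (rule ext)
  fix n
  show "?lhs n = ?rhs n"
  apply (simp only: pi3_mult_def pi3_act_def pi3_inv_def prod.case snd_conv fst_conv)
  apply (rule eqm_conclude[where M="int (fact n)"])
      apply (rule zadd_E zmul_E zneg_E eqm_refl)+
    apply (simp add: algebra_simps)
   apply (simp add: zadd_def)
  apply (simp add: zadd_def)
  done
qed

theorem proposition12p1:
  fixes G :: "('g, 'm) monoid_scheme" and T :: "'g topology"
    and chi :: "'g \<Rightarrow> zhat" and p :: "'g \<Rightarrow> piab" and a b :: "'g \<Rightarrow> zhat"
  assumes "profinite_group G T"
    and "zhat_character G T chi"
    and "piab_cocycle G T chi p"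
    and "\<And>g. b g = fst (p g)"
    and "\<And>g. a g = snd (p g)"
  shows "\<forall>P. pi3_lift T p P \<longrightarrow>
           (\<exists>\<delta>. (\<forall>g\<in>carrier G. \<forall>h\<in>carrier G. delta2_cochain G chi P g h = pi3_comm (\<delta> g h)) \<and>
                cohomologous_Z2 G T chi \<delta> (cup11 chi b a))"
proof (intro allI impI)
  fix P assume L: "pi3_lift T p P"
  have grp: "group G" and top: "topspace T = carrier G"
    using assms(1) unfolding profinite_group_def by auto
  have mon: "monoid G" using grp by (rule group.is_monoid)
  have Pc: "continuous_map T (prod_topology zhat_top (prod_topology zhat_top zhat_top)) P"
    and proj: "\<And>g. g \<in> topspace T \<Longrightarrow> pi3_proj (P g) = p g"
    using L unfolding pi3_lift_def by auto
  have pc: "continuous_map T (prod_topology zhat_top zhat_top) p"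
    and coc: "\<And>g h. g \<in> carrier G \<Longrightarrow> h \<in> carrier G \<Longrightarrow>
       p (g \<otimes>\<^bsub>G\<^esub> h) = piab_add (p g) (piab_act chi g (p h))"
    using assms(3) unfolding piab_cocycle_def by auto
  define c where "c g = snd (snd (P g))" for g
  have Peq: "P g = (b g, a g, c g)" if g: "g \<in> carrier G" for g
  proof -
    have "pi3_proj (P g) = p g" using proj g top by simp
    then show ?thesis using assms(4,5)[of g] unfolding pi3_proj_def c_def
      by (cases "P g"; cases "p g") auto
  qed
  have bmul: "b (g \<otimes>\<^bsub>G\<^esub> h) = zadd (b g) (zmul (chi g) (b h))"
    if "g \<in> carrier G" "h \<in> carrier G" for g h
    using coc[OF that] assms(4) by (simp add: piab_add_def piab_act_def)
  have amul: "a (g \<otimes>\<^bsub>G\<^esub> h) = zadd (a g) (zmul (chi g) (a h))"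
    if "g \<in> carrier G" "h \<in> carrier G" for g h
    using coc[OF that] assms(5) by (simp add: piab_add_def piab_act_def)
  have cc: "continuous_map T zhat_top c"
  proof -
    have "continuous_map T zhat_top (snd \<circ> (snd \<circ> P))"
      using continuous_map_snd_of[OF continuous_map_snd_of[OF Pc]] by (simp add: o_def)
    then show ?thesis unfolding c_def o_def by simp
  qed
  have ac: "continuous_map T zhat_top a"
  proof -
    have "continuous_map T zhat_top (snd \<circ> p)" by (rule continuous_map_snd_of[OF pc])
    moreover have "a = snd \<circ> p" using assms(5) by (simp add: fun_eq_iff)
    ultimately show ?thesis by simp
  qed
  have bc: "continuous_map T zhat_top b"
  proof -
    have "continuous_map T zhat_top (fst \<circ> p)" by (rule continuous_map_fst_of[OF pc])
    moreover have "b = fst \<circ> p" using assms(4) by (simp add: fun_eq_iff)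
    ultimately show ?thesis by simp
  qed
  define \<delta> where "\<delta> g h = snd (snd (delta2_cochain G chi P g h))" for g h
  define c' where "c' g = zadd (c g) (zmul (a g) (b g))" for g
  have c'c: "continuous_map T zhat_top c'"
    unfolding c'_def by (rule zadd_cont[OF cc zmul_cont[OF ac bc]])
  have D: "delta2_cochain G chi P g h = pi3_mult (pi3_mult (b g, a g, c g) (pi3_act chi g (b h, a h, c h)))
      (pi3_inv (zadd (b g) (zmul (chi g) (b h)), zadd (a g) (zmul (chi g) (a h)), c (g \<otimes>\<^bsub>G\<^esub> h)))"
    if g: "g \<in> carrier G" and h: "h \<in> carrier G" for g h
  proof -
    have gh: "g \<otimes>\<^bsub>G\<^esub> h \<in> carrier G" using monoid.m_closed[OF mon g h] .
    show ?thesis unfolding delta2_cochain_def Peq[OF g] Peq[OF h] Peq[OF gh]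
      bmul[OF g h] amul[OF g h] ..
  qed
  show "\<exists>\<delta>. (\<forall>g\<in>carrier G. \<forall>h\<in>carrier G. delta2_cochain G chi P g h = pi3_comm (\<delta> g h)) \<and>
                cohomologous_Z2 G T chi \<delta> (cup11 chi b a)"
  proof (intro exI conjI ballI)
    fix g h assume g: "g \<in> carrier G" and h: "h \<in> carrier G"
    show "delta2_cochain G chi P g h = pi3_comm (\<delta> g h)"
      unfolding \<delta>_def D[OF g h]
      by (simp only: pi3_mult_def pi3_act_def pi3_inv_def prod.case snd_conv fst_conv
           zcancel pi3_comm_def)
  next
    show "cohomologous_Z2 G T chi \<delta> (cup11 chi b a)"
      unfolding cohomologous_Z2_def
    proof (intro exI conjI ballI)
      show "continuous_map T zhat_top c'" by (rule c'c)
    next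
      fix g h assume g: "g \<in> carrier G" and h: "h \<in> carrier G"
      show "\<delta> g h = zadd (cup11 chi b a g h) (coboundary_Z2 G chi c' g h)"
        unfolding \<delta>_def D[OF g h] cup11_def coboundary_Z2_def c'_def
          bmul[OF g h] amul[OF g h]
        by (rule key)
    qed
  qed
qed

end
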